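(* Let $\Gamma$ be a Deza graph with parameters $(n,k,k-1,a)$, $k>1$, $\beta=1$. Let $x$ be an $NA$-vertex and $y$ an $A$-vertex. Then (1) if $x$ and $y$ are adjacent, then $y$ and $y_b$ both lie in $N(x,x')$; (2) either all possible edges between $\{x,x',x_b,x_b'\}$ and $\{y,y_b\}$ are present, or there are no such edges.
   Context: A Deza graph with parameters $(n,k,b,a)$, $a\le b$, is a $k$-regular graph on $n$ vertices in which any two distinct vertices have $a$ or $b$ common neighbours; $\beta$ is the number of vertices $u\ne v$ with exactly $b$ common neighbours with a given vertex $v$. Since $\beta=1$, for each vertex $x$ let $x_b$ denote the unique vertex having $b=k-1$ common neighbours with $x$. A vertex $x$ is an $A$-vertex if $x$ is adjacent to $x_b$, and an $NA$-vertex otherwise. $N(x,y)$ is the set of common neighbours of $x$ and $y$. For an $NA$-vertex $x$, $x'$ denotes the unique neighbour of $x$ not adjacent to $x_b$, and $x_b'=(x')_b=(x_b)'$. *)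

theory Defs
  imports Main
begin

definition common_nbrs :: "'v set \<Rightarrow> ('v \<Rightarrow> 'v \<Rightarrow> bool) \<Rightarrow> 'v \<Rightarrow> 'v \<Rightarrow> 'v set" where
  "common_nbrs V E x y = {z \<in> V. E x z \<and> E y z}"

definition deza_graph :: "'v set \<Rightarrow> ('v \<Rightarrow> 'v \<Rightarrow> bool) \<Rightarrow> nat \<Rightarrow> nat \<Rightarrow> nat \<Rightarrow> nat \<Rightarrow> bool" where
  "deza_graph V E n k b a \<longleftrightarrow>
     finite V \<and> card V = n \<and>
     (\<forall>x y. E x y \<longrightarrow> x \<in> V \<and> y \<in> V) \<and>
     (\<forall>x y. E x y \<longrightarrow> E y x) \<and>
     (\<forall>x. \<not> E x x) \<and>
     (\<forall>x \<in> V. card {y \<in> V. E x y} = k) \<and>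
     a \<le> b \<and>
     (\<forall>x \<in> V. \<forall>y \<in> V. x \<noteq> y \<longrightarrow>
        card (common_nbrs V E x y) = a \<or> card (common_nbrs V E x y) = b)"

definition beta_at :: "'v set \<Rightarrow> ('v \<Rightarrow> 'v \<Rightarrow> bool) \<Rightarrow> nat \<Rightarrow> 'v \<Rightarrow> nat" where
  "beta_at V E b v = card {u \<in> V. u \<noteq> v \<and> card (common_nbrs V E v u) = b}"

text \<open>x_b: the unique vertex having b common neighbours with x (meaningful when beta = 1).\<close>
definition bvert :: "'v set \<Rightarrow> ('v \<Rightarrow> 'v \<Rightarrow> bool) \<Rightarrow> nat \<Rightarrow> 'v \<Rightarrow> 'v" where
  "bvert V E b x = (THE u. u \<in> V \<and> u \<noteq> x \<and> card (common_nbrs V E x u) = b)"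

definition A_vertex :: "'v set \<Rightarrow> ('v \<Rightarrow> 'v \<Rightarrow> bool) \<Rightarrow> nat \<Rightarrow> 'v \<Rightarrow> bool" where
  "A_vertex V E b x \<longleftrightarrow> x \<in> V \<and> E x (bvert V E b x)"

definition NA_vertex :: "'v set \<Rightarrow> ('v \<Rightarrow> 'v \<Rightarrow> bool) \<Rightarrow> nat \<Rightarrow> 'v \<Rightarrow> bool" where
  "NA_vertex V E b x \<longleftrightarrow> x \<in> V \<and> \<not> E x (bvert V E b x)"

text \<open>x': the unique neighbour of x not adjacent to x_b (meaningful for NA-vertices).\<close>
definition pvert :: "'v set \<Rightarrow> ('v \<Rightarrow> 'v \<Rightarrow> bool) \<Rightarrow> nat \<Rightarrow> 'v \<Rightarrow> 'v" where
  "pvert V E b x = (THE u. u \<in> V \<and> E x u \<and> \<not> E u (bvert V E b x))"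

end

theory Submission
  imports Defs
begin


lemma even_invol:
  assumes "finite T" "\<forall>w\<in>T. f w \<in> T \<and> f w \<noteq> w \<and> f (f w) = w"
  shows "even (card T)"
  using assms
proof (induct "card T" arbitrary: T rule: less_induct)
  case less
  show ?case
  proof (cases "T = {}")
    case True then show ?thesis by simp
  next
    case False
    then obtain w where w: "w \<in> T" by blast
    define T' where "T' = T - {w, f w}"
    have fw: "f w \<in> T" "f w \<noteq> w" using less.prems w by auto
    have cT: "card T = card T' + 2"
    proof -
      have sub: "{w, f w} \<subseteq> T" using w fw by auto
      have "card {w, f w} = 2" using fw by simp
      then show ?thesis using card_Diff_subset[OF _ sub] card_mono[OF less.prems(1) sub] less.prems(1) sub
        unfolding T'_def by (metis finite_subset le_add_diff_inverse2)
    qed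
    have "even (card T')"
    proof (rule less.hyps)
      show "card T' < card T" using cT by simp
      show "finite T'" using less.prems(1) T'_def by simp
      show "\<forall>u\<in>T'. f u \<in> T' \<and> f u \<noteq> u \<and> f (f u) = u"
        using less.prems(2) w unfolding T'_def by (metis Diff_iff insert_iff singletonD)
    qed
    then show ?thesis using cT by simp
  qed
qed

lemma card_split:
  assumes "finite D" "q \<notin> D"
  shows "card {w \<in> insert q D. P w} = card {w\<in>D. P w} + (if P q then 1 else 0)"
proof -
  have "{w \<in> insert q D. P w} = (if P q then insert q {w\<in>D. P w} else {w\<in>D. P w})" by auto
  then show ?thesis using assms by auto
qed

context
  fixes V :: "'v set" and E :: "'v \<Rightarrow> 'v \<Rightarrow> bool" and n k a :: nat
  assumes deza: "deza_graph V E n k (k - 1) a"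
    and k1: "k > 1"
    and beta1: "\<forall>v \<in> V. beta_at V E (k - 1) v = 1"
begin

abbreviation "sg \<equiv> bvert V E (k - 1)"
abbreviation "pp \<equiv> pvert V E (k - 1)"

lemma finV: "finite V" using deza by (simp add: deza_graph_def)
lemma symE: "E u w \<Longrightarrow> E w u" using deza by (simp add: deza_graph_def)
lemma inV1: "E u w \<Longrightarrow> u \<in> V" using deza by (simp add: deza_graph_def)
lemma inV2: "E u w \<Longrightarrow> w \<in> V" using deza by (simp add: deza_graph_def)
lemma irr: "\<not> E u u" using deza by (simp add: deza_graph_def)
lemma deg: "u \<in> V \<Longrightarrow> card {w\<in>V. E u w} = k" using deza by (simp add: deza_graph_def)
lemma cnc: "u \<in> V \<Longrightarrow> w \<in> V \<Longrightarrow> u \<noteq> w \<Longrightarrow>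
   card (common_nbrs V E u w) = a \<or> card (common_nbrs V E u w) = k - 1"
  using deza by (simp add: deza_graph_def)
lemma cn_sym: "common_nbrs V E u w = common_nbrs V E w u"
  by (auto simp: common_nbrs_def)

lemma sig:
  assumes v: "v \<in> V"
  shows "sg v \<in> V \<and> sg v \<noteq> v \<and> card (common_nbrs V E v (sg v)) = k - 1 \<and>
    (\<forall>u\<in>V. u \<noteq> v \<longrightarrow> card (common_nbrs V E v u) = k - 1 \<longrightarrow> u = sg v)"
proof -
  have "card {u \<in> V. u \<noteq> v \<and> card (common_nbrs V E v u) = k - 1} = 1"
    using beta1 v by (simp add: beta_at_def)
  then obtain s where s: "{u \<in> V. u \<noteq> v \<and> card (common_nbrs V E v u) = k - 1} = {s}"
    by (rule card_1_singletonE)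
  have "sg v = s" unfolding bvert_def
    by (rule the_equality) (use s in blast)+
  then show ?thesis using s by blast
qed

lemma sigsig: "v \<in> V \<Longrightarrow> sg (sg v) = v"
  using sig[of v] sig[of "sg v"] cn_sym by metis

lemma cn_a: "v \<in> V \<Longrightarrow> u \<in> V \<Longrightarrow> u \<noteq> v \<Longrightarrow> u \<noteq> sg v \<Longrightarrow> card (common_nbrs V E v u) = a"
  using sig[of v] cnc[of v u] by metis

lemma p_prop:
  assumes v: "v \<in> V"
  shows "pp v \<in> V \<and> E v (pp v) \<and> \<not> E (pp v) (sg v) \<and> (\<forall>z. E v z \<longrightarrow> \<not> E z (sg v) \<longrightarrow> z = pp v)"
proof -
  let ?N = "{z\<in>V. E v z}"
  let ?C = "common_nbrs V E v (sg v)"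
  have sub: "?C \<subseteq> ?N" by (auto simp: common_nbrs_def)
  have fN: "finite ?N" using finV by simp
  have "card (?N - ?C) = 1"
    using card_Diff_subset[OF finite_subset[OF sub fN] sub] deg[OF v] sig[OF v] k1 by simp
  then obtain s where s: "?N - ?C = {s}" by (rule card_1_singletonE)
  have M: "?N - ?C = {z. z \<in> V \<and> E v z \<and> \<not> E z (sg v)}"
    by (auto simp: common_nbrs_def intro: symE)
  have "pp v = s" unfolding pvert_def
    by (rule the_equality) (use s M in blast)+
  then show ?thesis using s M by (auto dest: inV2)
qed

lemma A_p: "v \<in> V \<Longrightarrow> E v (sg v) \<Longrightarrow> pp v = sg v"
  using p_prop[of v] irr by metis

lemma Nv: "v \<in> V \<Longrightarrow> {w\<in>V. E v w} = insert (pp v) (common_nbrs V E v (sg v))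
   \<and> pp v \<notin> common_nbrs V E v (sg v)"
  using p_prop[of v] by (auto simp: common_nbrs_def dest: symE inV2)

lemma L6:
  assumes v: "v \<in> V" and z: "z \<in> V" "z \<noteq> v" "z \<noteq> sg v"
  shows "E z (pp v) \<longleftrightarrow> E z (pp (sg v))"
proof -
  define D where "D = common_nbrs V E v (sg v)"
  have sv: "sg v \<in> V" "sg (sg v) = v" using sig[OF v] sigsig[OF v] by auto
  have D2: "common_nbrs V E (sg v) (sg (sg v)) = D" using sv cn_sym D_def by simp
  have fD: "finite D" using finV D_def by (simp add: common_nbrs_def)
  have N1: "{w\<in>V. E v w} = insert (pp v) D" "pp v \<notin> D" using Nv[OF v] D_def by auto
  have N2: "{w\<in>V. E (sg v) w} = insert (pp (sg v)) D" "pp (sg v) \<notin> D" using Nv[OF sv(1)] D2 by auto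
  have c1: "common_nbrs V E z v = {w \<in> insert (pp v) D. E z w}"
    using N1(1) by (auto simp: common_nbrs_def)
  have c2: "common_nbrs V E z (sg v) = {w \<in> insert (pp (sg v)) D. E z w}"
    using N2(1) by (auto simp: common_nbrs_def)
  have a1: "card (common_nbrs V E z v) = a" using cn_a[OF v z(1) z(2) z(3)] cn_sym by simp
  have a2: "card (common_nbrs V E z (sg v)) = a" using cn_a[OF sv(1) z(1) z(3)] z(2) sv(2) cn_sym by simp
  have e1: "card {w\<in>D. E z w} + (if E z (pp v) then 1 else 0) = a"
    using a1 c1 card_split[OF fD N1(2), of "E z"] by simp
  have e2: "card {w\<in>D. E z w} + (if E z (pp (sg v)) then 1 else 0) = a"
    using a2 c2 card_split[OF fD N2(2), of "E z"] by simp
  show ?thesis using e1 e2 by (auto split: if_splits)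
qed

lemma NA_facts:
  assumes v: "v \<in> V" and na: "\<not> E v (sg v)"
  shows "sg (pp v) = pp (sg v) \<and> pp (pp v) = v \<and> \<not> E (pp v) (pp (sg v))"
proof -
  define x' where "x' = pp v"
  define xb where "xb = sg v"
  define xb' where "xb' = pp xb"
  have x': "x' \<in> V" "E v x'" "\<not> E x' xb" using p_prop[OF v] x'_def xb_def by auto
  have xb: "xb \<in> V" "sg xb = v" using sig[OF v] sigsig[OF v] xb_def by auto
  have xb': "xb' \<in> V" "E xb xb'" "\<not> E xb' v" using p_prop[OF xb(1)] xb'_def xb by auto
  have ne1: "x' \<noteq> v" using x' irr by metis
  have ne2: "x' \<noteq> xb" using x' na xb_def by metis
  have n1: "\<not> E x' xb'" using L6[OF v x'(1) ne1] ne2 irr x'_def xb_def xb'_def by metis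
  have cn: "common_nbrs V E x' xb' = {w\<in>V. E x' w} - {v}"
  proof
    show "common_nbrs V E x' xb' \<subseteq> {w\<in>V. E x' w} - {v}"
      using xb'(3) by (auto simp: common_nbrs_def)
    show "{w\<in>V. E x' w} - {v} \<subseteq> common_nbrs V E x' xb'"
    proof
      fix w assume w: "w \<in> {w\<in>V. E x' w} - {v}"
      then have wV: "w \<in> V" "E x' w" "w \<noteq> v" by auto
      have "w \<noteq> xb" using wV x'(3) by metis
      then have "E w x' \<longleftrightarrow> E w xb'" using L6[OF v wV(1) wV(3)] x'_def xb_def xb'_def by metis
      then show "w \<in> common_nbrs V E x' xb'" using wV symE by (auto simp: common_nbrs_def)
    qed
  qed
  have "card (common_nbrs V E x' xb') = k - 1"
    unfolding cn using deg[OF x'(1)] x'(2) v symE finV by (simp add: card_Diff_singleton)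
  moreover have "xb' \<noteq> x'" using x'(2) xb'(3) symE by metis
  ultimately have s: "sg x' = xb'" using sig[OF x'(1)] xb'(1) by metis
  have "pp x' = v" using p_prop[OF x'(1)] s x'(2) xb'(3) symE by metis
  then show ?thesis using s n1 x'_def xb_def xb'_def by simp
qed

lemma out:
  assumes "w \<in> common_nbrs V E u v" "sg w \<notin> common_nbrs V E u v"
  shows "u = pp w \<or> v = pp w"
proof -
  have w: "w \<in> V" "E u w" "E v w" using assms(1) by (auto simp: common_nbrs_def)
  have "sg w \<in> V" using sig[OF w(1)] by simp
  then have "\<not> E u (sg w) \<or> \<not> E v (sg w)" using assms(2) symE by (auto simp: common_nbrs_def)
  then show ?thesis using p_prop[OF w(1)] w symE by metis
qed

lemma out2:
  assumes "w \<in> common_nbrs V E u v" "sg w \<notin> common_nbrs V E u v" "u \<in> V" "v \<in> V"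
  shows "w \<in> {sg u, pp u, sg v, pp v}"
proof -
  have w: "w \<in> V" using assms(1) by (auto simp: common_nbrs_def)
  have c: "pp w = u \<or> pp w = v" using out[OF assms(1,2)] by metis
  show ?thesis
  proof (cases "E w (sg w)")
    case True
    then have "sg w = u \<or> sg w = v" using A_p[OF w] c by simp
    then show ?thesis using sigsig[OF w] by auto
  next
    case False
    then have "pp (pp w) = w" using NA_facts[OF w] by simp
    then show ?thesis using c by auto
  qed
qed

lemma even_T:
  assumes "u \<in> V" "v \<in> V"
  shows "even (card {w \<in> common_nbrs V E u v. sg w \<in> common_nbrs V E u v})"
proof (rule even_invol[where f = sg])
  show "finite {w \<in> common_nbrs V E u v. sg w \<in> common_nbrs V E u v}"
    using finV by (simp add: common_nbrs_def)
  show "\<forall>w\<in>{w \<in> common_nbrs V E u v. sg w \<in> common_nbrs V E u v}.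
      sg w \<in> {w \<in> common_nbrs V E u v. sg w \<in> common_nbrs V E u v} \<and> sg w \<noteq> w \<and> sg (sg w) = w"
  proof
    fix w assume w: "w \<in> {w \<in> common_nbrs V E u v. sg w \<in> common_nbrs V E u v}"
    then have wV: "w \<in> V" by (auto simp: common_nbrs_def)
    show "sg w \<in> {w \<in> common_nbrs V E u v. sg w \<in> common_nbrs V E u v} \<and> sg w \<noteq> w \<and> sg (sg w) = w"
      using w sigsig[OF wV] sig[OF wV] by auto
  qed
qed

lemma main:
  assumes NAx: "NA_vertex V E (k - 1) x" and Ay: "A_vertex V E (k - 1) y"
  shows "(E x y \<longrightarrow>
            y \<in> common_nbrs V E x (pvert V E (k - 1) x) \<and>
            bvert V E (k - 1) y \<in> common_nbrs V E x (pvert V E (k - 1) x))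
       \<and> ((\<forall>u \<in> {x, pvert V E (k - 1) x, bvert V E (k - 1) x,
                   pvert V E (k - 1) (bvert V E (k - 1) x)}.
              \<forall>w \<in> {y, bvert V E (k - 1) y}. E u w)
          \<or> (\<forall>u \<in> {x, pvert V E (k - 1) x, bvert V E (k - 1) x,
                   pvert V E (k - 1) (bvert V E (k - 1) x)}.
              \<forall>w \<in> {y, bvert V E (k - 1) y}. \<not> E u w))"
proof -
  have x: "x \<in> V" "\<not> E x (sg x)" using NAx by (auto simp: NA_vertex_def)
  have y: "y \<in> V" "E y (sg y)" using Ay by (auto simp: A_vertex_def)
  define xb where "xb = sg x"
  define x' where "x' = pp x"
  define xb' where "xb' = pp xb"
  define yb where "yb = sg y"
  have xb: "xb \<in> V" "sg xb = x" "\<not> E xb x" using sig[OF x(1)] sigsig[OF x(1)] x symE xb_def by auto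
  have x': "x' \<in> V" "E x x'" "\<not> E x' xb" using p_prop[OF x(1)] x'_def xb_def by auto
  have xb': "xb' \<in> V" "E xb xb'" "\<not> E xb' x" using p_prop[OF xb(1)] xb'_def xb by auto
  have nf: "sg x' = xb'" "pp x' = x" "\<not> E x' xb'" using NA_facts[OF x] x'_def xb_def xb'_def by auto
  have xbs: "sg xb' = x'" using sigsig[OF x'(1)] nf by simp
  have nf2: "pp xb' = xb" using NA_facts[OF x'(1)] nf xb_def by simp
  have yb: "yb \<in> V" "sg yb = y" "pp y = yb" "E yb y" using sig[OF y(1)] sigsig[OF y(1)] A_p[OF y] y symE yb_def by auto
  have syb: "sg y = yb" using yb_def by simp
  have pyb: "pp yb = y" using A_p[OF yb(1)] yb by simp
  have NAQ: "\<forall>u\<in>{x, x', xb, xb'}. u \<in> V \<and> \<not> E u (sg u)"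
    using x x' xb xb' nf xbs xb_def symE by auto
  have Ayy: "E y (sg y)" "E yb (sg yb)" using y yb by auto
  have dQ: "\<forall>u\<in>{x, x', xb, xb'}. u \<noteq> y \<and> u \<noteq> yb" using NAQ Ayy by metis
  let ?S1 = "common_nbrs V E x x'"
  have ca1: "card ?S1 = a" using cn_a[OF x(1) x'(1)] x'(2) x(2) irr xb_def by metis
  have T1: "{w \<in> ?S1. sg w \<in> ?S1} = ?S1"
  proof -
    have "sg w \<in> ?S1" if w: "w \<in> ?S1" for w
    proof (rule ccontr)
      assume "sg w \<notin> ?S1"
      then have "w \<in> {sg x, pp x, sg x', pp x'}" using out2[OF w _ x(1) x'(1)] by blast
      then have "w \<in> {xb, x', xb', x}" using nf xb_def x'_def by auto
      then show False using w x(2) xb_def irr xb'(3) symE by (auto simp: common_nbrs_def)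
    qed
    then show ?thesis by auto
  qed
  have evena: "even a" using even_T[OF x(1) x'(1)] T1 ca1 by simp
  let ?S2 = "common_nbrs V E x y"
  let ?T2 = "{w \<in> ?S2. sg w \<in> ?S2}"
  have ca2: "card ?S2 = a" using cn_a[OF x(1) y(1)] dQ xb_def by auto
  have D2: "?S2 - ?T2 = {w \<in> insert x' {yb}. w \<in> ?S2}"
  proof
    show "?S2 - ?T2 \<subseteq> {w \<in> insert x' {yb}. w \<in> ?S2}"
    proof
      fix w assume w: "w \<in> ?S2 - ?T2"
      then have "w \<in> {sg x, pp x, sg y, pp y}" using out2[of w x y] x(1) y(1) by blast
      moreover have "sg x = xb" "pp x = x'" "sg y = yb" "pp y = yb" using xb_def x'_def yb_def yb(3) by auto
      ultimately have "w \<in> {xb, x', yb}" by simp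
      then show "w \<in> {w \<in> insert x' {yb}. w \<in> ?S2}" using w x(2) xb_def by (auto simp: common_nbrs_def)
    qed
    show "{w \<in> insert x' {yb}. w \<in> ?S2} \<subseteq> ?S2 - ?T2"
      using nf(1) yb(2) xb'(3) irr symE by (auto simp: common_nbrs_def)
  qed
  have fS2: "finite ?S2" using finV by (simp add: common_nbrs_def)
  have "card ?S2 = card ?T2 + card (?S2 - ?T2)"
    using fS2 by (metis (no_types, lifting) card_Diff_subset le_add_diff_inverse mem_Collect_eq subsetI
       card_mono finite_subset)
  moreover have "card {w \<in> insert x' {yb}. w \<in> ?S2} = (if yb \<in> ?S2 then 1 else 0) + (if x' \<in> ?S2 then 1 else 0)"
  proof -
    have "x' \<noteq> yb" using dQ by auto
    then have h: "card {w \<in> insert x' {yb}. w \<in> ?S2} = card {w\<in>{yb}. w\<in>?S2} + (if x' \<in> ?S2 then 1 else 0)"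
      by (intro card_split) auto
    have h2: "card {w\<in>{yb}. w\<in>?S2} = (if yb\<in>?S2 then 1 else 0)"
      using card_split[of "{}" yb "\<lambda>w. w \<in> ?S2"] by simp
    show ?thesis using h h2 by simp
  qed
  moreover have "even (card ?T2)" using even_T[OF x(1) y(1)] .
  ultimately have par: "even ((if yb \<in> ?S2 then 1 else 0) + (if x' \<in> ?S2 then (1::nat) else 0))"
    using ca2 evena D2 by (metis even_add)
  have "yb \<in> ?S2 \<longleftrightarrow> E x yb" unfolding common_nbrs_def using yb(1) yb(4) symE by blast
  moreover have "x' \<in> ?S2 \<longleftrightarrow> E y x'" using x' by (auto simp: common_nbrs_def)
  ultimately have k1': "E x yb \<longleftrightarrow> E y x'" using par by (auto split: if_splits)
  have k2: "E x yb \<longleftrightarrow> E x y" using L6[OF y(1) x(1)] dQ yb(3) pyb syb by auto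
  have k3: "E y x \<longleftrightarrow> E y xb"
    using L6[OF x'(1) y(1)] dQ nf nf2 by auto
  have k4: "E y x' \<longleftrightarrow> E y xb'" using L6[OF x(1) y(1)] dQ x'_def xb_def xb'_def by auto
  have k5: "\<forall>u\<in>{x, x', xb, xb'}. E u yb \<longleftrightarrow> E u y"
    using L6[OF y(1)] dQ NAQ yb(3) pyb syb by auto
  have all: "\<forall>u\<in>{x, x', xb, xb'}. \<forall>w\<in>{y, yb}. E u w \<longleftrightarrow> E x y"
    using k1' k2 k3 k4 k5 symE by blast
  have part1: "E x y \<longrightarrow> y \<in> common_nbrs V E x x' \<and> yb \<in> common_nbrs V E x x'"
    using all y yb by (auto simp: common_nbrs_def)
  show ?thesis using part1 all unfolding xb_def x'_def xb'_def yb_def by blast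
qed

end

theorem lemma18:
  fixes V :: "'v set" and E :: "'v \<Rightarrow> 'v \<Rightarrow> bool" and n k a :: nat and x y :: 'v
  assumes deza: "deza_graph V E n k (k - 1) a"
    and k1: "k > 1"
    and beta1: "\<forall>v \<in> V. beta_at V E (k - 1) v = 1"
    and NAx: "NA_vertex V E (k - 1) x"
    and Ay: "A_vertex V E (k - 1) y"
  shows "(E x y \<longrightarrow>
            y \<in> common_nbrs V E x (pvert V E (k - 1) x) \<and>
            bvert V E (k - 1) y \<in> common_nbrs V E x (pvert V E (k - 1) x))
       \<and> ((\<forall>u \<in> {x, pvert V E (k - 1) x, bvert V E (k - 1) x,
                   pvert V E (k - 1) (bvert V E (k - 1) x)}.
              \<forall>w \<in> {y, bvert V E (k - 1) y}. E u w)
          \<or> (\<forall>u \<in> {x, pvert V E (k - 1) x, bvert V E (k - 1) x,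
                   pvert V E (k - 1) (bvert V E (k - 1) x)}.
              \<forall>w \<in> {y, bvert V E (k - 1) y}. \<not> E u w))"
    using main[OF deza k1 beta1 NAx Ay] .

end
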